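(* For every open continuous surjection $f:X\to Y$ between compact Hausdorff spaces, the map $OS(f):OS(X)\to OS(Y)$ is open.
   Context: All spaces are compact Hausdorff and all maps continuous. For a compactum $X$, $C(X)$ is the Banach space of continuous real functions on $X$ with the sup-norm, $c_X$ the constant function with value $c$. Let $V(X)=\prod_{\varphi\in C(X)}[\min\varphi,\max\varphi]$ with the product topology. A functional $\nu:C(X)\to\mathbb{R}$ is: normed if $\nu(1_X)=1$; weakly additive if $\nu(\varphi+c_X)=\nu(\varphi)+c$; order-preserving if $\varphi\le\psi$ implies $\nu(\varphi)\le\nu(\psi)$; positively homogeneous if $\nu(t\varphi)=t\nu(\varphi)$ for $t\ge0$; semiadditive if $\nu(\varphi+\psi)\le\nu(\varphi)+\nu(\psi)$. $OS(X)\subset V(X)$ is the subspace of functionals satisfying all five properties. For $f:X\to Y$, $OS(f)(\nu)(\varphi)=\nu(\varphi\circ f)$ for $\varphi\in C(Y)$. *)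

theory Defs
  imports "HOL-Analysis.Analysis"
begin

definition CX :: "('a::topological_space \<Rightarrow> real) set" where
  "CX = {\<phi>. continuous_on UNIV \<phi>}"

text \<open>V(X) = product over C(X) of [min phi, max phi], product topology.
  Its elements are the extensional functions on C(X).\<close>
definition VX :: "(('a::topological_space \<Rightarrow> real) \<Rightarrow> real) topology" where
  "VX = product_topology (\<lambda>\<phi>. top_of_set {Inf (range \<phi>) .. Sup (range \<phi>)}) CX"

definition OSX :: "(('a::topological_space \<Rightarrow> real) \<Rightarrow> real) set" where
  "OSX = {\<nu> \<in> topspace VX.
      \<nu> (\<lambda>_. 1) = 1 \<and>
      (\<forall>\<phi>\<in>CX. \<forall>c::real. \<nu> (\<lambda>x. \<phi> x + c) = \<nu> \<phi> + c) \<and>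
      (\<forall>\<phi>\<in>CX. \<forall>\<psi>\<in>CX. (\<forall>x. \<phi> x \<le> \<psi> x) \<longrightarrow> \<nu> \<phi> \<le> \<nu> \<psi>) \<and>
      (\<forall>\<phi>\<in>CX. \<forall>t::real. t \<ge> 0 \<longrightarrow> \<nu> (\<lambda>x. t * \<phi> x) = t * \<nu> \<phi>) \<and>
      (\<forall>\<phi>\<in>CX. \<forall>\<psi>\<in>CX. \<nu> (\<lambda>x. \<phi> x + \<psi> x) \<le> \<nu> \<phi> + \<nu> \<psi>)}"

definition OS_top :: "(('a::topological_space \<Rightarrow> real) \<Rightarrow> real) topology" where
  "OS_top = subtopology VX OSX"

definition OS_map :: "('a::topological_space \<Rightarrow> 'b::topological_space)
    \<Rightarrow> (('a \<Rightarrow> real) \<Rightarrow> real) \<Rightarrow> (('b \<Rightarrow> real) \<Rightarrow> real)" where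
  "OS_map f \<nu> = (\<lambda>\<phi>\<in>CX. \<nu> (\<phi> \<circ> f))"

end

theory Submission
  imports Defs
begin

lemma CX_const[simp]: "(\<lambda>_. c) \<in> CX" by (simp add: CX_def)
lemma CX_add: "\<phi> \<in> CX \<Longrightarrow> \<psi> \<in> CX \<Longrightarrow> (\<lambda>x. \<phi> x + \<psi> x) \<in> CX"
  unfolding CX_def mem_Collect_eq by (intro continuous_on_add)
lemma CX_diff: "\<phi> \<in> CX \<Longrightarrow> \<psi> \<in> CX \<Longrightarrow> (\<lambda>x. \<phi> x - \<psi> x) \<in> CX"
  unfolding CX_def mem_Collect_eq by (intro continuous_on_diff)
lemma CX_minus: "\<phi> \<in> CX \<Longrightarrow> (\<lambda>x. - \<phi> x) \<in> CX"
  unfolding CX_def mem_Collect_eq by (intro continuous_on_minus)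
lemma CX_cmult: "\<phi> \<in> CX \<Longrightarrow> (\<lambda>x. c * \<phi> x) \<in> CX"
  unfolding CX_def mem_Collect_eq by (intro continuous_on_mult continuous_on_const)
lemma CX_addc: "\<phi> \<in> CX \<Longrightarrow> (\<lambda>x. \<phi> x + c) \<in> CX"
  unfolding CX_def mem_Collect_eq by (intro continuous_on_add continuous_on_const)
lemma CX_sum: "finite S \<Longrightarrow> (\<And>i. i \<in> S \<Longrightarrow> g i \<in> CX) \<Longrightarrow> (\<lambda>x. \<Sum>i\<in>S. c i * g i x) \<in> CX"
  unfolding CX_def mem_Collect_eq by (intro continuous_on_sum continuous_on_mult continuous_on_const) auto
lemma CX_comp: "\<psi> \<in> CX \<Longrightarrow> continuous_on UNIV f \<Longrightarrow> (\<psi> \<circ> f) \<in> CX"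
  unfolding CX_def o_def mem_Collect_eq by (rule continuous_on_compose2[of UNIV \<psi> UNIV f]) auto

context fixes \<nu> :: "('a::topological_space \<Rightarrow> real) \<Rightarrow> real" assumes nu: "\<nu> \<in> OSX"
begin
lemma os_norm: "\<nu> (\<lambda>_. 1) = 1" using nu by (simp add: OSX_def)
lemma os_addc: "\<phi> \<in> CX \<Longrightarrow> \<nu> (\<lambda>x. \<phi> x + c) = \<nu> \<phi> + c" using nu by (simp add: OSX_def)
lemma os_mono: "\<phi> \<in> CX \<Longrightarrow> \<psi> \<in> CX \<Longrightarrow> (\<And>x. \<phi> x \<le> \<psi> x) \<Longrightarrow> \<nu> \<phi> \<le> \<nu> \<psi>"
  using nu by (simp add: OSX_def)
lemma os_hom: "\<phi> \<in> CX \<Longrightarrow> t \<ge> 0 \<Longrightarrow> \<nu> (\<lambda>x. t * \<phi> x) = t * \<nu> \<phi>" using nu by (simp add: OSX_def)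
lemma os_sub: "\<phi> \<in> CX \<Longrightarrow> \<psi> \<in> CX \<Longrightarrow> \<nu> (\<lambda>x. \<phi> x + \<psi> x) \<le> \<nu> \<phi> + \<nu> \<psi>"
  using nu by (simp add: OSX_def)
lemma os_top: "\<nu> \<in> topspace VX" using nu by (simp add: OSX_def)
lemma os_zero: "\<nu> (\<lambda>_. 0) = 0"
  using os_hom[of "\<lambda>_. 1" 0] by simp
lemma os_const: "\<nu> (\<lambda>_. c) = c"
  using os_addc[of "\<lambda>_. 0" c] os_zero by simp
lemma os_mono_c: "\<phi> \<in> CX \<Longrightarrow> \<psi> \<in> CX \<Longrightarrow> (\<And>x. \<phi> x \<le> \<psi> x + c) \<Longrightarrow> \<nu> \<phi> \<le> \<nu> \<psi> + c"
  using os_mono[of \<phi> "\<lambda>x. \<psi> x + c"] os_addc[of \<psi> c] CX_addc by auto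
lemma os_lip: "\<phi> \<in> CX \<Longrightarrow> \<psi> \<in> CX \<Longrightarrow> (\<And>x. \<bar>\<phi> x - \<psi> x\<bar> \<le> e) \<Longrightarrow> \<bar>\<nu> \<phi> - \<nu> \<psi>\<bar> \<le> e"
proof -
  assume a: "\<phi> \<in> CX" "\<psi> \<in> CX" "\<And>x. \<bar>\<phi> x - \<psi> x\<bar> \<le> e"
  have h1: "\<phi> x \<le> \<psi> x + e" "\<psi> x \<le> \<phi> x + e" for x using a(3)[of x] by (simp_all add: abs_le_iff)
  have "\<nu> \<phi> \<le> \<nu> \<psi> + e" using a(1,2) h1(1) by (rule os_mono_c)
  moreover have "\<nu> \<psi> \<le> \<nu> \<phi> + e" using a(2,1) h1(2) by (rule os_mono_c)
  ultimately show ?thesis by linarith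
qed
lemma os_neg: "\<phi> \<in> CX \<Longrightarrow> 0 \<le> \<nu> \<phi> + \<nu> (\<lambda>x. - \<phi> x)"
proof -
  assume a: "\<phi> \<in> CX"
  have "\<nu> (\<lambda>x. \<phi> x + - \<phi> x) \<le> \<nu> \<phi> + \<nu> (\<lambda>x. - \<phi> x)" by (rule os_sub[OF a CX_minus[OF a]])
  moreover have "(\<lambda>x. \<phi> x + - \<phi> x) = (\<lambda>_. 0)" by simp
  ultimately show ?thesis using os_zero by simp
qed
lemma os_sum: "finite S \<Longrightarrow> (\<And>i. i \<in> S \<Longrightarrow> g i \<in> CX) \<Longrightarrow> (\<And>i. i \<in> S \<Longrightarrow> c i \<ge> 0) \<Longrightarrow>
   \<nu> (\<lambda>x. \<Sum>i\<in>S. c i * g i x) \<le> (\<Sum>i\<in>S. c i * \<nu> (g i))"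
proof (induction S rule: finite_induct)
  case empty then show ?case using os_zero by simp
next
  case (insert a S)
  have "\<nu> (\<lambda>x. \<Sum>i\<in>insert a S. c i * g i x) = \<nu> (\<lambda>x. c a * g a x + (\<Sum>i\<in>S. c i * g i x))"
    using insert by simp
  also have "\<dots> \<le> \<nu> (\<lambda>x. c a * g a x) + \<nu> (\<lambda>x. \<Sum>i\<in>S. c i * g i x)"
    using insert by (intro os_sub CX_cmult CX_sum) auto
  also have "\<dots> \<le> c a * \<nu> (g a) + (\<Sum>i\<in>S. c i * \<nu> (g i))"
    using insert by (simp add: os_hom)
  finally show ?case using insert by simp
qed
end

lemma eval_open:
  assumes "\<phi> \<in> CX" "open A"
  shows "openin VX {l\<in>topspace VX. l \<phi> \<in> A}"
proof -
  let ?I = "{Inf (range \<phi>) .. Sup (range \<phi>)}"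
  have cm: "continuous_map VX (top_of_set ?I) (\<lambda>x. x \<phi>)"
    unfolding VX_def using continuous_map_product_projection[OF assms(1)] by simp
  have "openin (top_of_set ?I) (?I \<inter> A)" using assms(2) by (simp add: openin_open_Int)
  from openin_continuous_map_preimage[OF cm this]
  have "openin VX {x \<in> topspace VX. x \<phi> \<in> ?I \<inter> A}" .
  moreover have "{x \<in> topspace VX. x \<phi> \<in> ?I \<inter> A} = {l\<in>topspace VX. l \<phi> \<in> A}"
    using assms(1) by (auto simp: VX_def PiE_iff)
  ultimately show ?thesis by simp
qed

lemma eval_open_finite:
  assumes "finite K'" "\<And>k. k \<in> K' \<Longrightarrow> F k \<in> CX" "\<And>k. k \<in> K' \<Longrightarrow> open (A k)"
  shows "openin VX {l\<in>topspace VX. \<forall>k\<in>K'. l (F k) \<in> A k}"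
  using assms
proof (induction K' rule: finite_induct)
  case empty then show ?case by simp
next
  case (insert a K')
  have "{l\<in>topspace VX. \<forall>k\<in>insert a K'. l (F k) \<in> A k} =
        {l\<in>topspace VX. l (F a) \<in> A a} \<inter> {l\<in>topspace VX. \<forall>k\<in>K'. l (F k) \<in> A k}" by auto
  moreover have "openin VX {l\<in>topspace VX. l (F a) \<in> A a}"
    by (rule eval_open) (use insert.prems in auto)
  moreover have "openin VX {l\<in>topspace VX. \<forall>k\<in>K'. l (F k) \<in> A k}"
    by (rule insert.IH) (use insert.prems in auto)
  ultimately show ?case by (simp add: openin_Int)
qed

lemma family:
  fixes F :: "'p::topological_space \<Rightarrow> ('b::topological_space \<Rightarrow> real)"
  assumes K: "compact K" and FC: "\<And>k. k\<in>K \<Longrightarrow> F k \<in> CX"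
   and Fc: "\<And>k e. k\<in>K \<Longrightarrow> e > 0 \<Longrightarrow> \<exists>W. open W \<and> k \<in> W \<and> (\<forall>k'\<in>W\<inter>K. \<forall>y. \<bar>F k y - F k' y\<bar> \<le> e)"
   and mu: "\<mu> \<in> OSX" and d: "\<delta> > 0"
  shows "\<exists>V. openin OS_top V \<and> \<mu> \<in> V \<and> (\<forall>l\<in>V. \<forall>k\<in>K. \<bar>l (F k) - \<mu> (F k)\<bar> < \<delta>)"
proof -
  have "\<forall>k\<in>K. \<exists>W. open W \<and> k \<in> W \<and> (\<forall>k'\<in>W\<inter>K. \<forall>y. \<bar>F k y - F k' y\<bar> \<le> \<delta>/4)"
  proof
    fix k assume "k \<in> K" then show "\<exists>W. open W \<and> k \<in> W \<and> (\<forall>k'\<in>W\<inter>K. \<forall>y. \<bar>F k y - F k' y\<bar> \<le> \<delta>/4)"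
      by (rule Fc) (use d in auto)
  qed
  then obtain W where W: "\<And>k. k\<in>K \<Longrightarrow> open (W k) \<and> k \<in> W k \<and> (\<forall>k'\<in>W k\<inter>K. \<forall>y. \<bar>F k y - F k' y\<bar> \<le> \<delta>/4)"
    by metis
  have "K \<subseteq> (\<Union>k\<in>K. W k)" using W by blast
  then obtain K' where K': "K' \<subseteq> K" "finite K'" "K \<subseteq> (\<Union>k\<in>K'. W k)"
    using compactE_image[OF K, of K W] W by metis
  define V where "V = OSX \<inter> {l\<in>topspace VX. \<forall>k\<in>K'. l (F k) \<in> ball (\<mu> (F k)) (\<delta>/4)}"
  have "openin OS_top V"
    unfolding V_def OS_top_def openin_subtopology
    using eval_open_finite[OF K'(2), of F "\<lambda>k. ball (\<mu> (F k)) (\<delta>/4)"] FC K'(1) by blast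
  moreover have "\<mu> \<in> V" unfolding V_def using mu d os_top[OF mu] by auto
  moreover have "\<bar>l (F k) - \<mu> (F k)\<bar> < \<delta>" if l: "l \<in> V" and k: "k \<in> K" for l k
  proof -
    obtain k' where k': "k' \<in> K'" "k \<in> W k'" using K' k by blast
    have kk: "\<forall>y. \<bar>F k' y - F k y\<bar> \<le> \<delta>/4" using W[of k'] k' K' k by auto
    have lo: "l \<in> OSX" and lk: "\<bar>l (F k') - \<mu> (F k')\<bar> < \<delta>/4"
      using l k' unfolding V_def by (auto simp: dist_real_def abs_minus_commute)
    have "\<bar>l (F k') - l (F k)\<bar> \<le> \<delta>/4" using kk FC k K' k' by (intro os_lip[OF lo]) auto
    moreover have "\<bar>\<mu> (F k') - \<mu> (F k)\<bar> \<le> \<delta>/4" using kk FC k K' k' by (intro os_lip[OF mu]) auto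
    ultimately show ?thesis using lk by linarith
  qed
  ultimately show ?thesis by blast
qed


locale S =
  fixes f :: "'a::t2_space \<Rightarrow> 'b::t2_space"
  assumes cX: "compact (UNIV :: 'a set)" and cY: "compact (UNIV :: 'b set)"
    and contf: "continuous_on UNIV f"
    and openf: "\<And>U. open U \<Longrightarrow> open (f ` U)"
    and surjf: "surj f"
begin

definition M :: "('a \<Rightarrow> real) \<Rightarrow> 'b \<Rightarrow> real" where
  "M \<phi> y = Sup (\<phi> ` (f -` {y}))"

lemma fiber_compact: "compact (f -` {y})"
proof -
  have "closed (f -` {y} \<inter> UNIV)" using contf continuous_on_closed_vimage[OF closed_UNIV] closed_singleton by blast
  then have "closed (f -` {y})" by simp
  from compact_Int_closed[OF cX this] show ?thesis by simp
qed

lemma fiber_ne: "f -` {y} \<noteq> {}"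
proof -
  obtain x where "y = f x" using surjf by (rule surjE)
  then show ?thesis by auto
qed

lemma fiber_cont: assumes "\<phi> \<in> CX" shows "continuous_on (f -` {y}) \<phi>"
  using assms unfolding CX_def mem_Collect_eq by (rule continuous_on_subset) simp

lemma M_ge: assumes "\<phi> \<in> CX" shows "\<phi> x \<le> M \<phi> (f x)"
proof -
  have "compact (\<phi> ` (f -` {f x}))" by (rule compact_continuous_image[OF fiber_cont[OF assms] fiber_compact])
  then have "bdd_above (\<phi> ` (f -` {f x}))" by (rule bounded_imp_bdd_above[OF compact_imp_bounded])
  then show ?thesis unfolding M_def by (rule cSup_upper[rotated]) simp
qed

lemma M_attain: assumes "\<phi> \<in> CX" shows "\<exists>x. f x = y \<and> M \<phi> y = \<phi> x"
proof -
  obtain x where x: "x \<in> f -` {y}" "\<forall>z\<in>f -` {y}. \<phi> z \<le> \<phi> x"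
    using continuous_attains_sup[OF fiber_compact fiber_ne fiber_cont[OF assms]] by blast
  have "Sup (\<phi> ` (f -` {y})) = \<phi> x" by (rule cSup_eq_maximum) (use x in auto)
  then show ?thesis using x unfolding M_def by auto
qed

lemma M_le: assumes "\<phi> \<in> CX" "\<And>x. \<phi> x \<le> g (f x)" shows "M \<phi> y \<le> g y"
proof -
  obtain x where "f x = y" "M \<phi> y = \<phi> x" using M_attain[OF assms(1), of y] by blast
  then show ?thesis using assms(2)[of x] by simp
qed

lemma M_cont: assumes "\<phi> \<in> CX" shows "M \<phi> \<in> CX"
proof -
  have lt: "{y. M \<phi> y < a} = - (f ` {x. a \<le> \<phi> x})" for a
  proof
    show "{y. M \<phi> y < a} \<subseteq> - f ` {x. a \<le> \<phi> x}"
    proof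
      fix y assume y: "y \<in> {y. M \<phi> y < a}"
      show "y \<in> - f ` {x. a \<le> \<phi> x}"
      proof
        assume "y \<in> f ` {x. a \<le> \<phi> x}"
        then obtain x where "y = f x" "a \<le> \<phi> x" by blast
        then show False using M_ge[OF assms, of x] y by simp
      qed
    qed
    show "- f ` {x. a \<le> \<phi> x} \<subseteq> {y. M \<phi> y < a}"
    proof
      fix y assume "y \<in> - f ` {x. a \<le> \<phi> x}"
      moreover obtain x where "f x = y" "M \<phi> y = \<phi> x" using M_attain[OF assms] by blast
      ultimately show "y \<in> {y. M \<phi> y < a}" by (metis (mono_tags, lifting) ComplD image_eqI mem_Collect_eq not_le)
    qed
  qed
  have gt: "{y. a < M \<phi> y} = f ` {x. a < \<phi> x}" for a
  proof
    show "{y. a < M \<phi> y} \<subseteq> f ` {x. a < \<phi> x}"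
    proof
      fix y assume "y \<in> {y. a < M \<phi> y}"
      moreover obtain x where "f x = y" "M \<phi> y = \<phi> x" using M_attain[OF assms] by blast
      ultimately show "y \<in> f ` {x. a < \<phi> x}" by (metis (mono_tags, lifting) image_eqI mem_Collect_eq)
    qed
    show "f ` {x. a < \<phi> x} \<subseteq> {y. a < M \<phi> y}"
    proof
      fix y assume "y \<in> f ` {x. a < \<phi> x}"
      then obtain x where "y = f x" "a < \<phi> x" by blast
      then show "y \<in> {y. a < M \<phi> y}" using M_ge[OF assms, of x] by simp
    qed
  qed
  have c\<phi>: "continuous_on UNIV \<phi>" using assms by (simp add: CX_def)
  have o1: "open {y. M \<phi> y < a}" for a
  proof -
    have "closed {x. a \<le> \<phi> x}" using c\<phi> by (simp add: closed_Collect_le continuous_on_const)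
    then have "compact {x. a \<le> \<phi> x}" using compact_Int_closed[OF cX] by simp
    then have "compact (f ` {x. a \<le> \<phi> x})" using contf
      by (metis compact_continuous_image continuous_on_subset top_greatest)
    then show ?thesis unfolding lt by (simp add: compact_imp_closed open_Compl)
  qed
  have o2: "open {y. a < M \<phi> y}" for a
  proof -
    have "open {x. a < \<phi> x}" using c\<phi> by (simp add: open_Collect_less continuous_on_const)
    then show ?thesis unfolding gt by (rule openf)
  qed
  have "isCont (M \<phi>) y" for y
    unfolding isCont_def order_tendsto_iff
  proof safe
    fix a assume "a < M \<phi> y"
    then show "\<forall>\<^sub>F z in at y. a < M \<phi> z" using o2[of a] eventually_at_topological by blast
  next
    fix a assume "M \<phi> y < a"
    then show "\<forall>\<^sub>F z in at y. M \<phi> z < a" using o1[of a] eventually_at_topological by blast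
  qed
  then show ?thesis unfolding CX_def by (simp add: continuous_at_imp_continuous_on)
qed

lemma M_comp_add: assumes "\<psi> \<in> CX" "\<phi> \<in> CX" shows "M (\<lambda>x. \<psi> (f x) + \<phi> x) y = \<psi> y + M \<phi> y"
proof -
  have c: "(\<lambda>x. \<psi> (f x) + \<phi> x) \<in> CX" using CX_add[OF CX_comp[OF assms(1) contf] assms(2)] by (simp add: o_def)
  have "M (\<lambda>x. \<psi> (f x) + \<phi> x) y \<le> \<psi> y + M \<phi> y"
    using M_ge[OF assms(2)] by (intro M_le[OF c]) (simp add: add_mono)
  moreover obtain x where "f x = y" "M \<phi> y = \<phi> x" using M_attain[OF assms(2)] by blast
  then have "\<psi> y + M \<phi> y \<le> M (\<lambda>x. \<psi> (f x) + \<phi> x) y" using M_ge[OF c, of x] by simp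
  ultimately show ?thesis by simp
qed

lemma M_const: "M (\<lambda>_. c) y = c"
  using M_comp_add[of "\<lambda>_. c" "\<lambda>_. 0" y] M_attain[of "\<lambda>_. 0" y] by simp

lemma M_comp: assumes "\<psi> \<in> CX" shows "M (\<lambda>x. \<psi> (f x)) y = \<psi> y"
  using M_comp_add[OF assms, of "\<lambda>_. 0" y] M_const[of 0 y] by simp

lemma M_mono: assumes "\<phi> \<in> CX" "\<psi> \<in> CX" "\<And>x. \<phi> x \<le> \<psi> x" shows "M \<phi> y \<le> M \<psi> y"
  using M_ge[OF assms(2)] assms(3) by (intro M_le[OF assms(1)]) (meson order_trans)

lemma M_addc: assumes "\<phi> \<in> CX" shows "M (\<lambda>x. \<phi> x + c) y = M \<phi> y + c"
  using M_comp_add[OF CX_const[of c] assms, of y] by (simp add: add.commute)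

lemma M_hom: assumes "\<phi> \<in> CX" "c \<ge> 0" shows "M (\<lambda>x. c * \<phi> x) y = c * M \<phi> y"
proof -
  have c: "(\<lambda>x. c * \<phi> x) \<in> CX" using assms CX_cmult by blast
  have "M (\<lambda>x. c * \<phi> x) y \<le> c * M \<phi> y"
    using M_ge[OF assms(1)] assms(2) by (intro M_le[OF c]) (simp add: mult_left_mono)
  moreover obtain x where "f x = y" "M \<phi> y = \<phi> x" using M_attain[OF assms(1)] by blast
  then have "c * M \<phi> y \<le> M (\<lambda>x. c * \<phi> x) y" using M_ge[OF c, of x] by simp
  ultimately show ?thesis by simp
qed

lemma M_sub: assumes "\<phi> \<in> CX" "\<psi> \<in> CX" shows "M (\<lambda>x. \<phi> x + \<psi> x) y \<le> M \<phi> y + M \<psi> y"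
  using M_ge[OF assms(1)] M_ge[OF assms(2)] by (intro M_le[OF CX_add[OF assms]]) (simp add: add_mono)

lemma M_lip: assumes "\<phi> \<in> CX" "\<psi> \<in> CX" "\<And>x. \<bar>\<phi> x - \<psi> x\<bar> \<le> e" shows "\<bar>M \<phi> y - M \<psi> y\<bar> \<le> e"
proof -
  have h1: "\<phi> x \<le> \<psi> x + e" "\<psi> x \<le> \<phi> x + e" for x using assms(3)[of x] by (simp_all add: abs_le_iff)
  have "M \<phi> y \<le> M (\<lambda>x. \<psi> x + e) y" using M_mono[OF assms(1) CX_addc[OF assms(2)]] h1 by blast
  moreover have "M \<psi> y \<le> M (\<lambda>x. \<phi> x + e) y" using M_mono[OF assms(2) CX_addc[OF assms(1)]] h1 by blast
  ultimately have "M \<phi> y \<le> M \<psi> y + e" "M \<psi> y \<le> M \<phi> y + e" by (simp_all add: M_addc assms)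
  then show ?thesis by linarith
qed

end

definition gsum :: "('a \<Rightarrow> real) set \<Rightarrow> (('a \<Rightarrow> real) \<Rightarrow> real) \<Rightarrow> 'a \<Rightarrow> real" where
  "gsum \<Phi> t x = (\<Sum>i\<in>\<Phi>. t i * i x)"

definition Tset :: "('a \<Rightarrow> real) set \<Rightarrow> (('a \<Rightarrow> real) \<Rightarrow> real) set" where
  "Tset \<Phi> = {t. \<forall>i\<in>\<Phi>. 0 \<le> t i}"

lemma gsum_CX: "finite \<Phi> \<Longrightarrow> \<Phi> \<subseteq> CX \<Longrightarrow> gsum \<Phi> t \<in> CX"
  unfolding gsum_def[abs_def] by (rule CX_sum) auto

lemma gsum_zero[simp]: "gsum \<Phi> (\<lambda>_. 0) x = 0" by (simp add: gsum_def)

lemma gsum_scale: "gsum \<Phi> (\<lambda>i. c * t i) x = c * gsum \<Phi> t x"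
  by (simp add: gsum_def sum_distrib_left mult.assoc)

lemma gsum_add: "gsum \<Phi> (\<lambda>i. t i + t' i) x = gsum \<Phi> t x + gsum \<Phi> t' x"
  by (simp add: gsum_def sum.distrib distrib_right)

lemma gsum_delta: "finite \<Phi> \<Longrightarrow> j \<in> \<Phi> \<Longrightarrow> gsum \<Phi> (\<lambda>i. if i = j then 1 else 0) x = j x"
proof -
  assume a: "finite \<Phi>" "j \<in> \<Phi>"
  have e: "(\<lambda>i. (if i = j then 1 else 0) * i x) = (\<lambda>i. if i = j then j x else 0)" by auto
  show ?thesis unfolding gsum_def e using sum.delta[OF a(1), of j "\<lambda>_. j x"] a(2) by simp
qed

lemma sum_delta2: "finite \<Phi> \<Longrightarrow> j \<in> \<Phi> \<Longrightarrow> (\<Sum>i\<in>\<Phi>. (if i = j then 1 else 0) * a i) = (a j :: real)"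
proof -
  assume a: "finite \<Phi>" "j \<in> \<Phi>"
  have e: "(\<lambda>i. (if i = j then 1 else 0) * a i) = (\<lambda>i. if i = j then a j else 0)" by auto
  show ?thesis unfolding e using sum.delta[OF a(1), of j "\<lambda>_. a j"] a(2) by simp
qed

lemma CX_bounded: assumes "compact (UNIV :: 'a::topological_space set)" "\<phi> \<in> CX"
  shows "bounded (range (\<phi> :: 'a \<Rightarrow> real))"
proof -
  have "compact (range \<phi>)" using assms unfolding CX_def mem_Collect_eq by (rule compact_continuous_image[rotated])
  then show ?thesis by (rule compact_imp_bounded)
qed

context S begin

definition trm :: "(('b \<Rightarrow> real) \<Rightarrow> real) \<Rightarrow> (('a \<Rightarrow> real) \<Rightarrow> real) \<Rightarrow> real \<Rightarrow> ('a \<Rightarrow> real) set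
   \<Rightarrow> ('a \<Rightarrow> real) \<Rightarrow> (('a \<Rightarrow> real) \<Rightarrow> real) \<Rightarrow> real" where
  "trm l \<nu> \<eta> \<Phi> \<phi> t = l (M (\<lambda>x. \<phi> x - gsum \<Phi> t x)) + (\<Sum>i\<in>\<Phi>. t i * (\<nu> i + \<eta>))"

definition Nf :: "(('b \<Rightarrow> real) \<Rightarrow> real) \<Rightarrow> (('a \<Rightarrow> real) \<Rightarrow> real) \<Rightarrow> real \<Rightarrow> ('a \<Rightarrow> real) set
   \<Rightarrow> ('a \<Rightarrow> real) \<Rightarrow> real" where
  "Nf l \<nu> \<eta> \<Phi> \<phi> = Inf (trm l \<nu> \<eta> \<Phi> \<phi> ` Tset \<Phi>)"

lemma construct:
  assumes nu: "\<nu> \<in> OSX" and Phi: "finite \<Phi>" and PhiC: "\<Phi> \<subseteq> CX" and lam: "l \<in> OSX"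
    and C1: "\<And>t. t \<in> Tset \<Phi> \<Longrightarrow> l (\<lambda>y. - M (\<lambda>x. - gsum \<Phi> t x) y) \<le> (\<Sum>i\<in>\<Phi>. t i * (\<nu> i + \<eta>))"
    and C2: "\<And>j t. j \<in> \<Phi> \<Longrightarrow> t \<in> Tset \<Phi> \<Longrightarrow> \<nu> j - \<eta> \<le> trm l \<nu> \<eta> \<Phi> j t"
  shows "restrict (Nf l \<nu> \<eta> \<Phi>) CX \<in> OSX \<and> OS_map f (restrict (Nf l \<nu> \<eta> \<Phi>) CX) = l
     \<and> (\<forall>j\<in>\<Phi>. \<bar>restrict (Nf l \<nu> \<eta> \<Phi>) CX j - \<nu> j\<bar> \<le> \<eta>)"
proof -
  define T where "T = Tset \<Phi>"
  define tr where "tr = trm l \<nu> \<eta> \<Phi>"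
  define N where "N = Nf l \<nu> \<eta> \<Phi>"
  have gC: "gsum \<Phi> t \<in> CX" for t using Phi PhiC by (rule gsum_CX)
  have dC: "(\<lambda>x. \<phi> x - gsum \<Phi> t x) \<in> CX" if "\<phi> \<in> CX" for \<phi> t using that gC by (rule CX_diff)
  have T0: "(\<lambda>_. 0) \<in> T" unfolding T_def Tset_def by simp
  have Tne: "T \<noteq> {}" using T0 by blast
  have tr_mono: "tr \<phi> t \<le> tr \<phi>' t" if "\<phi> \<in> CX" "\<phi>' \<in> CX" "\<And>x. \<phi> x \<le> \<phi>' x" for \<phi> \<phi>' t
  proof -
    have "M (\<lambda>x. \<phi> x - gsum \<Phi> t x) y \<le> M (\<lambda>x. \<phi>' x - gsum \<Phi> t x) y" for y
      using that by (intro M_mono dC) auto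
    then have "l (M (\<lambda>x. \<phi> x - gsum \<Phi> t x)) \<le> l (M (\<lambda>x. \<phi>' x - gsum \<Phi> t x))"
      using that by (intro os_mono[OF lam] M_cont dC) auto
    then show ?thesis unfolding tr_def trm_def by simp
  qed
  have K1: "l \<psi> \<le> tr (\<lambda>x. \<psi> (f x)) t" if psi: "\<psi> \<in> CX" and t: "t \<in> T" for \<psi> t
  proof -
    define h where "h = M (\<lambda>x. - gsum \<Phi> t x)"
    have hC: "h \<in> CX" unfolding h_def by (intro M_cont CX_minus gC)
    have e1: "M (\<lambda>x. \<psi> (f x) - gsum \<Phi> t x) = (\<lambda>y. \<psi> y + h y)"
    proof
      fix y
      have "M (\<lambda>x. \<psi> (f x) + - gsum \<Phi> t x) y = \<psi> y + h y"
        unfolding h_def by (rule M_comp_add[OF psi CX_minus[OF gC]])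
      then show "M (\<lambda>x. \<psi> (f x) - gsum \<Phi> t x) y = \<psi> y + h y" by simp
    qed
    have "l (\<lambda>y. (\<psi> y + h y) + - h y) \<le> l (\<lambda>y. \<psi> y + h y) + l (\<lambda>y. - h y)"
      by (rule os_sub[OF lam CX_add[OF psi hC] CX_minus[OF hC]])
    moreover have "(\<lambda>y. (\<psi> y + h y) + - h y) = \<psi>" by simp
    moreover have "l (\<lambda>y. - h y) \<le> (\<Sum>i\<in>\<Phi>. t i * (\<nu> i + \<eta>))" unfolding h_def using C1 t T_def by simp
    ultimately show ?thesis unfolding tr_def trm_def e1 by simp
  qed
  have lower: "\<exists>c. \<forall>t\<in>T. c \<le> tr \<phi> t" if phi: "\<phi> \<in> CX" for \<phi>
  proof -
    obtain B where B0: "\<forall>x\<in>range \<phi>. norm x \<le> B" using CX_bounded[OF cX phi] unfolding bounded_iff by blast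
    have B: "\<bar>\<phi> x\<bar> \<le> B" for x using B0 by auto
    have "- B \<le> tr \<phi> t" if t: "t \<in> T" for t
    proof -
      have "l (\<lambda>_. - B) \<le> tr (\<lambda>x. (\<lambda>_. - B) (f x)) t" by (rule K1[OF CX_const t])
      also have "\<dots> \<le> tr \<phi> t"
      proof (rule tr_mono[OF _ phi])
        fix x show "(\<lambda>_. - B) (f x) \<le> \<phi> x" using B[of x] by simp
      qed simp
      finally show ?thesis using os_const[OF lam] by simp
    qed
    then show ?thesis by blast
  qed
  have bdd: "bdd_below (tr \<phi> ` T)" if "\<phi> \<in> CX" for \<phi>
    using lower[OF that] unfolding bdd_below_def by blast
  have N_le: "N \<phi> \<le> tr \<phi> t" if "\<phi> \<in> CX" "t \<in> T" for \<phi> t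
    unfolding N_def Nf_def tr_def[symmetric] T_def[symmetric]
    by (rule cInf_lower) (use that bdd in auto)
  have N_ge: "c \<le> N \<phi>" if "\<And>t. t \<in> T \<Longrightarrow> c \<le> tr \<phi> t" for \<phi> c
    unfolding N_def Nf_def tr_def[symmetric] T_def[symmetric]
    by (rule cInf_greatest) (use that Tne in auto)
  have N_comp: "N (\<lambda>x. \<psi> (f x)) = l \<psi>" if psi: "\<psi> \<in> CX" for \<psi>
  proof -
    have c: "(\<lambda>x. \<psi> (f x)) \<in> CX" using CX_comp[OF psi contf] by (simp add: o_def)
    have "tr (\<lambda>x. \<psi> (f x)) (\<lambda>_. 0) = l \<psi>"
    proof -
      have e: "M (\<lambda>x. \<psi> (f x)) = \<psi>" by (rule ext) (rule M_comp[OF psi])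
      show ?thesis unfolding tr_def trm_def using e by simp
    qed
    then have "N (\<lambda>x. \<psi> (f x)) \<le> l \<psi>" using N_le[OF c T0] by simp
    moreover have "l \<psi> \<le> N (\<lambda>x. \<psi> (f x))" by (rule N_ge) (rule K1[OF psi])
    ultimately show ?thesis by simp
  qed
  have N_const: "N (\<lambda>_. c) = c" for c
    using N_comp[OF CX_const[of c]] os_const[OF lam] by simp
  have N_mono: "N \<phi> \<le> N \<phi>'" if "\<phi> \<in> CX" "\<phi>' \<in> CX" "\<And>x. \<phi> x \<le> \<phi>' x" for \<phi> \<phi>'
  proof (rule N_ge)
    fix t assume t: "t \<in> T"
    have "N \<phi> \<le> tr \<phi> t" by (rule N_le[OF that(1) t])
    also have "\<dots> \<le> tr \<phi>' t" by (rule tr_mono[OF that])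
    finally show "N \<phi> \<le> tr \<phi>' t" .
  qed
  have tr_addc: "tr (\<lambda>x. \<phi> x + c) t = tr \<phi> t + c" if phi: "\<phi> \<in> CX" for \<phi> c t
  proof -
    have "M (\<lambda>x. \<phi> x + c - gsum \<Phi> t x) = (\<lambda>y. M (\<lambda>x. \<phi> x - gsum \<Phi> t x) y + c)"
    proof
      fix y
      have "M (\<lambda>x. (\<phi> x - gsum \<Phi> t x) + c) y = M (\<lambda>x. \<phi> x - gsum \<Phi> t x) y + c"
        by (rule M_addc[OF dC[OF phi]])
      moreover have "(\<lambda>x. (\<phi> x - gsum \<Phi> t x) + c) = (\<lambda>x. \<phi> x + c - gsum \<Phi> t x)" by auto
      ultimately show "M (\<lambda>x. \<phi> x + c - gsum \<Phi> t x) y = M (\<lambda>x. \<phi> x - gsum \<Phi> t x) y + c" by simp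
    qed
    then show ?thesis unfolding tr_def trm_def using os_addc[OF lam M_cont[OF dC[OF phi]]] by simp
  qed
  have N_addc: "N (\<lambda>x. \<phi> x + c) = N \<phi> + c" if phi: "\<phi> \<in> CX" for \<phi> c
  proof -
    have "N (\<lambda>x. \<phi> x + c) - c \<le> N \<phi>"
    proof (rule N_ge)
      fix t assume t: "t \<in> T"
      have "N (\<lambda>x. \<phi> x + c) \<le> tr (\<lambda>x. \<phi> x + c) t" by (rule N_le[OF CX_addc[OF phi] t])
      then show "N (\<lambda>x. \<phi> x + c) - c \<le> tr \<phi> t" using tr_addc[OF phi, of c t] by simp
    qed
    moreover have "N \<phi> + c \<le> N (\<lambda>x. \<phi> x + c)"
    proof (rule N_ge)
      fix t assume t: "t \<in> T"
      have "N \<phi> \<le> tr \<phi> t" by (rule N_le[OF phi t])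
      then show "N \<phi> + c \<le> tr (\<lambda>x. \<phi> x + c) t" using tr_addc[OF phi, of c t] by simp
    qed
    ultimately show ?thesis by simp
  qed
  have tr_hom: "tr (\<lambda>x. c * \<phi> x) (\<lambda>i. c * t i) = c * tr \<phi> t" if phi: "\<phi> \<in> CX" and c: "c \<ge> 0" for \<phi> c t
  proof -
    have "M (\<lambda>x. c * \<phi> x - gsum \<Phi> (\<lambda>i. c * t i) x) = (\<lambda>y. c * M (\<lambda>x. \<phi> x - gsum \<Phi> t x) y)"
    proof
      fix y
      have "(\<lambda>x. c * \<phi> x - gsum \<Phi> (\<lambda>i. c * t i) x) = (\<lambda>x. c * (\<phi> x - gsum \<Phi> t x))"
        by (simp add: gsum_scale right_diff_distrib)
      then show "M (\<lambda>x. c * \<phi> x - gsum \<Phi> (\<lambda>i. c * t i) x) y = c * M (\<lambda>x. \<phi> x - gsum \<Phi> t x) y"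
        using M_hom[OF dC[OF phi] c] by simp
    qed
    moreover have "(\<Sum>i\<in>\<Phi>. c * t i * (\<nu> i + \<eta>)) = c * (\<Sum>i\<in>\<Phi>. t i * (\<nu> i + \<eta>))"
      by (simp add: sum_distrib_left mult.assoc)
    ultimately show ?thesis unfolding tr_def trm_def
      using os_hom[OF lam M_cont[OF dC[OF phi]] c] by (simp add: distrib_left)
  qed
  have scaleT: "(\<lambda>i. c * t i) \<in> T" if "t \<in> T" "c \<ge> 0" for t c
    using that unfolding T_def Tset_def by simp
  have N_hom: "N (\<lambda>x. c * \<phi> x) = c * N \<phi>" if phi: "\<phi> \<in> CX" and c: "c \<ge> 0" for \<phi> c
  proof (cases "c = 0")
    case True
    then show ?thesis using N_const[of 0] by simp
  next
    case False
    then have cp: "c > 0" using c by simp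
    have "N (\<lambda>x. c * \<phi> x) / c \<le> N \<phi>"
    proof (rule N_ge)
      fix t assume t: "t \<in> T"
      have "N (\<lambda>x. c * \<phi> x) \<le> tr (\<lambda>x. c * \<phi> x) (\<lambda>i. c * t i)"
        by (rule N_le[OF CX_cmult[OF phi] scaleT[OF t c]])
      then show "N (\<lambda>x. c * \<phi> x) / c \<le> tr \<phi> t"
        using tr_hom[OF phi c] cp by (simp add: divide_le_eq mult.commute)
    qed
    moreover have "c * N \<phi> \<le> N (\<lambda>x. c * \<phi> x)"
    proof (rule N_ge)
      fix t assume t: "t \<in> T"
      have t': "(\<lambda>i. (1/c) * t i) \<in> T" using scaleT[OF t, of "1/c"] cp by simp
      have "N \<phi> \<le> tr \<phi> (\<lambda>i. (1/c) * t i)" by (rule N_le[OF phi t'])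
      moreover have "tr (\<lambda>x. c * \<phi> x) (\<lambda>i. c * ((1/c) * t i)) = c * tr \<phi> (\<lambda>i. (1/c) * t i)"
        by (rule tr_hom[OF phi c])
      moreover have "(\<lambda>i. c * ((1/c) * t i)) = t" using cp by auto
      ultimately show "c * N \<phi> \<le> tr (\<lambda>x. c * \<phi> x) t" using cp by simp
    qed
    ultimately show ?thesis using cp by (simp add: divide_le_eq mult.commute)
  qed
  have tr_sub: "tr (\<lambda>x. \<phi> x + \<psi> x) (\<lambda>i. t i + t' i) \<le> tr \<phi> t + tr \<psi> t'"
    if phi: "\<phi> \<in> CX" and psi: "\<psi> \<in> CX" for \<phi> \<psi> t t'
  proof -
    let ?A = "M (\<lambda>x. \<phi> x - gsum \<Phi> t x)" and ?B = "M (\<lambda>x. \<psi> x - gsum \<Phi> t' x)"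
    have AC: "?A \<in> CX" and BC: "?B \<in> CX" by (intro M_cont dC phi psi)+
    have eq: "(\<lambda>x. \<phi> x + \<psi> x - gsum \<Phi> (\<lambda>i. t i + t' i) x) = (\<lambda>x. (\<phi> x - gsum \<Phi> t x) + (\<psi> x - gsum \<Phi> t' x))"
      by (simp add: gsum_add algebra_simps)
    have "M (\<lambda>x. \<phi> x + \<psi> x - gsum \<Phi> (\<lambda>i. t i + t' i) x) y \<le> ?A y + ?B y" for y
      unfolding eq by (rule M_sub[OF dC[OF phi] dC[OF psi]])
    then have "l (M (\<lambda>x. \<phi> x + \<psi> x - gsum \<Phi> (\<lambda>i. t i + t' i) x)) \<le> l (\<lambda>y. ?A y + ?B y)"
      by (intro os_mono[OF lam] M_cont CX_add AC BC dC phi psi)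
    also have "\<dots> \<le> l ?A + l ?B" by (rule os_sub[OF lam AC BC])
    finally have "l (M (\<lambda>x. \<phi> x + \<psi> x - gsum \<Phi> (\<lambda>i. t i + t' i) x)) \<le> l ?A + l ?B" .
    moreover have "(\<Sum>i\<in>\<Phi>. (t i + t' i) * (\<nu> i + \<eta>)) = (\<Sum>i\<in>\<Phi>. t i * (\<nu> i + \<eta>)) + (\<Sum>i\<in>\<Phi>. t' i * (\<nu> i + \<eta>))"
      by (simp add: sum.distrib distrib_right)
    ultimately show ?thesis unfolding tr_def trm_def by simp
  qed
  have addT: "(\<lambda>i. t i + t' i) \<in> T" if "t \<in> T" "t' \<in> T" for t t'
    using that unfolding T_def Tset_def by (simp add: add_nonneg_nonneg)
  have N_sub: "N (\<lambda>x. \<phi> x + \<psi> x) \<le> N \<phi> + N \<psi>" if phi: "\<phi> \<in> CX" and psi: "\<psi> \<in> CX" for \<phi> \<psi>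
  proof -
    have "N (\<lambda>x. \<phi> x + \<psi> x) - N \<phi> \<le> N \<psi>"
    proof (rule N_ge)
      fix t' assume t': "t' \<in> T"
      have "N (\<lambda>x. \<phi> x + \<psi> x) - tr \<psi> t' \<le> N \<phi>"
      proof (rule N_ge)
        fix t assume t: "t \<in> T"
        have "N (\<lambda>x. \<phi> x + \<psi> x) \<le> tr (\<lambda>x. \<phi> x + \<psi> x) (\<lambda>i. t i + t' i)"
          by (rule N_le[OF CX_add[OF phi psi] addT[OF t t']])
        then show "N (\<lambda>x. \<phi> x + \<psi> x) - tr \<psi> t' \<le> tr \<phi> t" using tr_sub[OF phi psi, of t t'] by simp
      qed
      then show "N (\<lambda>x. \<phi> x + \<psi> x) - N \<phi> \<le> tr \<psi> t'" by simp
    qed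
    then show ?thesis by simp
  qed
  have N_j1: "N j \<le> \<nu> j + \<eta>" if j: "j \<in> \<Phi>" for j
  proof -
    let ?d = "\<lambda>i. if i = j then 1 else (0::real)"
    have dT: "?d \<in> T" unfolding T_def Tset_def by simp
    have "(\<lambda>x. j x - gsum \<Phi> ?d x) = (\<lambda>_. 0)" using gsum_delta[OF Phi j] by simp
    then have "tr j ?d = \<nu> j + \<eta>"
      unfolding tr_def trm_def using ext[of "M (\<lambda>_. 0)" "\<lambda>_. 0", OF M_const] os_const[OF lam, of 0] sum_delta2[OF Phi j, of "\<lambda>i. \<nu> i + \<eta>"]
      by simp
    then show ?thesis using N_le[OF _ dT, of j] j PhiC by auto
  qed
  have N_j2: "\<nu> j - \<eta> \<le> N j" if j: "j \<in> \<Phi>" for j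
    by (rule N_ge) (use C2 j in \<open>simp add: tr_def T_def\<close>)
  define \<nu>' where "\<nu>' = restrict N CX"
  have top: "\<nu>' \<in> topspace VX"
  proof -
    have "N \<phi> \<in> {Inf (range \<phi>)..Sup (range \<phi>)}" if phi: "\<phi> \<in> CX" for \<phi>
    proof -
      have bd: "bounded (range \<phi>)" by (rule CX_bounded[OF cX phi])
      have "Inf (range \<phi>) \<le> \<phi> x" for x by (rule cInf_lower) (use bd bounded_imp_bdd_below in auto)
      then have "N (\<lambda>_. Inf (range \<phi>)) \<le> N \<phi>" by (intro N_mono phi CX_const)
      moreover have "\<phi> x \<le> Sup (range \<phi>)" for x by (rule cSup_upper) (use bd bounded_imp_bdd_above in auto)
      then have "N \<phi> \<le> N (\<lambda>_. Sup (range \<phi>))" by (intro N_mono phi CX_const)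
      ultimately show ?thesis using N_const by simp
    qed
    then show ?thesis unfolding VX_def \<nu>'_def by (simp add: restrict_PiE_iff)
  qed
  have OS: "\<nu>' \<in> OSX"
  proof -
    have 1: "\<nu>' (\<lambda>_. 1) = 1" unfolding \<nu>'_def using N_const by simp
    have 2: "\<forall>\<phi>\<in>CX. \<forall>c::real. \<nu>' (\<lambda>x. \<phi> x + c) = \<nu>' \<phi> + c"
      unfolding \<nu>'_def by (auto simp: CX_addc N_addc)
    have 3: "\<forall>\<phi>\<in>CX. \<forall>\<psi>\<in>CX. (\<forall>x. \<phi> x \<le> \<psi> x) \<longrightarrow> \<nu>' \<phi> \<le> \<nu>' \<psi>"
      unfolding \<nu>'_def using N_mono by simp
    have 4: "\<forall>\<phi>\<in>CX. \<forall>t::real. t \<ge> 0 \<longrightarrow> \<nu>' (\<lambda>x. t * \<phi> x) = t * \<nu>' \<phi>"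
      unfolding \<nu>'_def by (auto simp: CX_cmult N_hom)
    have 5: "\<forall>\<phi>\<in>CX. \<forall>\<psi>\<in>CX. \<nu>' (\<lambda>x. \<phi> x + \<psi> x) \<le> \<nu>' \<phi> + \<nu>' \<psi>"
      unfolding \<nu>'_def by (auto simp: CX_add N_sub)
    show ?thesis unfolding OSX_def using top 1 2 3 4 5 by blast
  qed
  have map: "OS_map f \<nu>' = l"
  proof
    fix \<psi>
    show "OS_map f \<nu>' \<psi> = l \<psi>"
    proof (cases "\<psi> \<in> CX")
      case True
      have c: "\<psi> \<circ> f \<in> CX" by (rule CX_comp[OF True contf])
      have "N (\<psi> \<circ> f) = l \<psi>" using N_comp[OF True] by (simp add: o_def)
      then show ?thesis unfolding OS_map_def \<nu>'_def using True c by simp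
    next
      case False
      have "l \<in> extensional CX" using os_top[OF lam] unfolding VX_def by (simp add: PiE_iff)
      then show ?thesis unfolding OS_map_def using False by (simp add: extensional_def)
    qed
  qed
  have close: "\<forall>j\<in>\<Phi>. \<bar>\<nu>' j - \<nu> j\<bar> \<le> \<eta>"
  proof
    fix j assume j: "j \<in> \<Phi>"
    then have "j \<in> CX" using PhiC by blast
    then show "\<bar>\<nu>' j - \<nu> j\<bar> \<le> \<eta>" using N_j1[OF j] N_j2[OF j] unfolding \<nu>'_def by (simp add: abs_le_iff)
  qed
  show ?thesis using OS map close unfolding \<nu>'_def N_def by simp
qed

end

definition cube :: "('a \<Rightarrow> real) set \<Rightarrow> (('a \<Rightarrow> real) \<Rightarrow> real) set" where
  "cube \<Phi> = {u. \<forall>i. u i \<in> (if i \<in> \<Phi> then {0..1} else {0})}"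

lemma compact_cube: "compact (cube \<Phi>)"
proof -
  let ?S = "\<lambda>i. if i \<in> \<Phi> then {0..1::real} else {0}"
  have e: "cube \<Phi> = PiE UNIV ?S" unfolding cube_def PiE_UNIV_domain by (simp add: Pi_def)
  have "compactin (product_topology (\<lambda>i. euclidean) UNIV) (PiE UNIV ?S)"
    unfolding compactin_PiE by auto
  then show ?thesis unfolding e euclidean_product_topology by simp
qed

lemma gsum_diff_bound:
  assumes "finite \<Phi>" "\<And>i x. i \<in> \<Phi> \<Longrightarrow> \<bar>i x\<bar> \<le> B" "\<And>i. i \<in> \<Phi> \<Longrightarrow> \<bar>u i - u' i\<bar> \<le> d" "0 \<le> d"
  shows "\<bar>gsum \<Phi> u x - gsum \<Phi> u' x\<bar> \<le> real (card \<Phi>) * (d * B)"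
proof -
  have "gsum \<Phi> u x - gsum \<Phi> u' x = (\<Sum>i\<in>\<Phi>. (u i - u' i) * i x)"
    unfolding gsum_def by (simp add: sum_subtractf left_diff_distrib)
  also have "\<bar>\<dots>\<bar> \<le> (\<Sum>i\<in>\<Phi>. \<bar>(u i - u' i) * i x\<bar>)" by (rule sum_abs)
  also have "\<dots> \<le> (\<Sum>i\<in>\<Phi>. d * B)"
  proof (rule sum_mono)
    fix i assume i: "i \<in> \<Phi>"
    show "\<bar>(u i - u' i) * i x\<bar> \<le> d * B" unfolding abs_mult
      by (rule mult_mono) (use assms(2,3,4) i in auto)
  qed
  also have "\<dots> = real (card \<Phi>) * (d * B)" by simp
  finally show ?thesis .
qed

lemma gsum_bound:
  assumes "finite \<Phi>" "\<And>i x. i \<in> \<Phi> \<Longrightarrow> \<bar>i x\<bar> \<le> B" "u \<in> cube \<Phi>"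
  shows "\<bar>gsum \<Phi> u x\<bar> \<le> real (card \<Phi>) * B"
proof -
  have "\<bar>u i - 0\<bar> \<le> 1" if "i \<in> \<Phi>" for i
  proof -
    have "u i \<in> (if i \<in> \<Phi> then {0..1} else {0})" using assms(3) unfolding cube_def by blast
    then show ?thesis using that by simp
  qed
  then have "\<bar>gsum \<Phi> u x - gsum \<Phi> (\<lambda>_. 0) x\<bar> \<le> real (card \<Phi>) * (1 * B)"
    by (intro gsum_diff_bound assms(1,2)) auto
  then show ?thesis by simp
qed

definition G :: "('a \<Rightarrow> real) \<Rightarrow> ('a \<Rightarrow> real) set \<Rightarrow> real \<times> real \<times> (('a \<Rightarrow> real) \<Rightarrow> real) \<Rightarrow> 'a \<Rightarrow> real" where
  "G j \<Phi> p = (\<lambda>x. fst p * j x - fst (snd p) * gsum \<Phi> (snd (snd p)) x)"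

definition Kset :: "('a \<Rightarrow> real) set \<Rightarrow> (real \<times> real \<times> (('a \<Rightarrow> real) \<Rightarrow> real)) set" where
  "Kset \<Phi> = {0..1} \<times> {0..1} \<times> cube \<Phi>"

lemma compact_Kset: "compact (Kset \<Phi>)"
  unfolding Kset_def by (intro compact_Times compact_Icc compact_cube)

lemma G_nbhd:
  assumes Phi: "finite \<Phi>" and B: "B > 0" "\<And>i x. i \<in> \<Phi> \<Longrightarrow> \<bar>i x\<bar> \<le> B" "\<And>x. \<bar>j x\<bar> \<le> B"
    and p: "p \<in> Kset \<Phi>" and e: "e > 0"
  shows "\<exists>W. open W \<and> p \<in> W \<and> (\<forall>p'\<in>W \<inter> Kset \<Phi>. \<forall>x. \<bar>G j \<Phi> p x - G j \<Phi> p' x\<bar> \<le> e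
            \<and> \<bar>gsum \<Phi> (snd (snd p)) x - gsum \<Phi> (snd (snd p')) x\<bar> \<le> e)"
proof -
  obtain r s u where pe: "p = (r, s, u)" by (cases p) auto
  define n where "n = real (card \<Phi>)"
  have n0: "n \<ge> 0" unfolding n_def by simp
  define d where "d = e / (B * (1 + 2 * n))"
  have d0: "d > 0" unfolding d_def using e B n0 by simp
  have dB: "d * B * (1 + 2 * n) = e" unfolding d_def using B n0 by simp
  define U where "U = {u'. \<forall>i\<in>\<Phi>. u' i \<in> ball (u i) d}"
  have oU: "open U" unfolding U_def using product_topology_basis'[OF Phi, of "\<lambda>i. ball (u i) d" "\<lambda>i. i"] by simp
  define W where "W = ball r d \<times> ball s d \<times> U"
  have oW: "open W" unfolding W_def by (intro open_Times open_ball oU)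
  have pW: "p \<in> W" unfolding W_def U_def pe using d0 by simp
  have bnd: "\<bar>G j \<Phi> p x - G j \<Phi> p' x\<bar> \<le> e \<and> \<bar>gsum \<Phi> (snd (snd p)) x - gsum \<Phi> (snd (snd p')) x\<bar> \<le> e"
    if p': "p' \<in> W \<inter> Kset \<Phi>" for p' x
  proof -
    obtain r' s' u' where pe': "p' = (r', s', u')" by (cases p') auto
    have rr: "\<bar>r - r'\<bar> \<le> d" and ss: "\<bar>s - s'\<bar> \<le> d" and uu: "\<And>i. i \<in> \<Phi> \<Longrightarrow> \<bar>u i - u' i\<bar> \<le> d"
      using p' unfolding pe' W_def U_def by (auto simp: dist_real_def)
    have s'1: "\<bar>s'\<bar> \<le> 1" using p' unfolding pe' Kset_def by auto
    have uc: "u \<in> cube \<Phi>" using p unfolding pe Kset_def by auto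
    define g where "g = gsum \<Phi> u x"
    define g' where "g' = gsum \<Phi> u' x"
    have gg: "\<bar>g - g'\<bar> \<le> n * (d * B)" unfolding g_def g'_def n_def
      by (intro gsum_diff_bound Phi B(2) uu) (use d0 in auto)
    have gb: "\<bar>g\<bar> \<le> n * B" unfolding g_def n_def by (intro gsum_bound Phi B(2) uc)
    have a: "\<bar>r - r'\<bar> * \<bar>j x\<bar> \<le> d * B" by (rule mult_mono) (use rr B(3) d0 in auto)
    have b: "\<bar>s - s'\<bar> * \<bar>g\<bar> \<le> d * (n * B)" by (rule mult_mono) (use ss gb d0 in auto)
    have c: "\<bar>s'\<bar> * \<bar>g - g'\<bar> \<le> 1 * (n * (d * B))" by (rule mult_mono) (use s'1 gg in auto)
    have eq: "(r * j x - s * g) - (r' * j x - s' * g') = (r - r') * j x - (s - s') * g - s' * (g - g')"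
      by (simp add: algebra_simps)
    have tri: "\<bar>(r - r') * j x - (s - s') * g - s' * (g - g')\<bar> \<le> \<bar>r - r'\<bar> * \<bar>j x\<bar> + \<bar>s - s'\<bar> * \<bar>g\<bar> + \<bar>s'\<bar> * \<bar>g - g'\<bar>"
    proof -
      have "\<bar>(r - r') * j x - (s - s') * g - s' * (g - g')\<bar> \<le> \<bar>(r - r') * j x - (s - s') * g\<bar> + \<bar>s' * (g - g')\<bar>"
        by (rule abs_triangle_ineq4)
      moreover have "\<bar>(r - r') * j x - (s - s') * g\<bar> \<le> \<bar>(r - r') * j x\<bar> + \<bar>(s - s') * g\<bar>"
        by (rule abs_triangle_ineq4)
      ultimately show ?thesis unfolding abs_mult by linarith
    qed
    have sumeq: "d * B + d * (n * B) + 1 * (n * (d * B)) = d * B * (1 + 2 * n)" by (simp add: algebra_simps)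
    have "\<bar>G j \<Phi> p x - G j \<Phi> p' x\<bar> = \<bar>(r - r') * j x - (s - s') * g - s' * (g - g')\<bar>"
      using eq unfolding G_def pe pe' g_def g'_def by simp
    also have "\<dots> \<le> d * B + d * (n * B) + 1 * (n * (d * B))" using tri a b c by linarith
    also have "\<dots> = e" using sumeq dB by simp
    finally have "\<bar>G j \<Phi> p x - G j \<Phi> p' x\<bar> \<le> e" .
    moreover have "n * (d * B) \<le> e"
    proof -
      have "0 \<le> n * (d * B)" using n0 d0 B(1) by simp
      moreover have "e = d * B + 2 * (n * (d * B))" using dB by (simp add: algebra_simps)
      moreover have "0 \<le> d * B" using d0 B(1) by simp
      ultimately show ?thesis by linarith
    qed
    then have "\<bar>gsum \<Phi> (snd (snd p)) x - gsum \<Phi> (snd (snd p')) x\<bar> \<le> e"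
      using gg unfolding pe pe' g_def g'_def by simp
    ultimately show ?thesis by blast
  qed
  show ?thesis using oW pW bnd by blast
qed

lemma bound_finite:
  assumes "compact (UNIV :: 'a::topological_space set)" "finite \<Phi>" "\<Phi> \<subseteq> CX"
  shows "\<exists>B>0. \<forall>i\<in>\<Phi>. \<forall>x::'a. \<bar>i x\<bar> \<le> B"
  using assms(2,3)
proof (induction \<Phi> rule: finite_induct)
  case empty then show ?case by (intro exI[of _ 1]) auto
next
  case (insert a F)
  obtain B where B: "B > 0" "\<forall>i\<in>F. \<forall>x. \<bar>i x\<bar> \<le> B" using insert by auto
  obtain B1 where B1: "\<forall>y\<in>range a. norm y \<le> B1"
    using CX_bounded[OF assms(1), of a] insert.prems unfolding bounded_iff by auto
  have "\<forall>i\<in>insert a F. \<forall>x. \<bar>i x\<bar> \<le> max B B1"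
  proof (intro ballI allI)
    fix i x assume i: "i \<in> insert a F"
    show "\<bar>i x\<bar> \<le> max B B1"
    proof (cases "i = a")
      case True then show ?thesis using B1 by (metis max.coboundedI2 rangeI real_norm_def)
    next
      case False then have "i \<in> F" using i by simp
      then show ?thesis using B(2) by (metis max.coboundedI1)
    qed
  qed
  then show ?case using B(1) by (intro exI[of _ "max B B1"]) auto
qed


lemma normalize:
  assumes Phi: "finite \<Phi>" and t: "t \<in> Tset \<Phi>"
  shows "\<exists>u\<in>cube \<Phi>. \<forall>i\<in>\<Phi>. t i = (\<Sum>i\<in>\<Phi>. t i) * u i"
proof -
  define s where "s = (\<Sum>i\<in>\<Phi>. t i)"
  have tn: "\<And>i. i \<in> \<Phi> \<Longrightarrow> 0 \<le> t i" using t unfolding Tset_def by auto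
  show ?thesis
  proof (cases "s = 0")
    case True
    have "sum t \<Phi> = 0 \<longleftrightarrow> (\<forall>i\<in>\<Phi>. t i = 0)" by (rule sum_nonneg_eq_0_iff[OF Phi]) (rule tn)
    then have "\<forall>i\<in>\<Phi>. t i = 0" using True unfolding s_def by simp
    moreover have "(\<lambda>_. 0) \<in> cube \<Phi>" unfolding cube_def by simp
    ultimately show ?thesis unfolding s_def[symmetric] using True by (intro bexI[of _ "\<lambda>_. 0"]) auto
  next
    case False
    have "s \<ge> 0" unfolding s_def using tn by (simp add: sum_nonneg)
    then have sp: "s > 0" using False by simp
    define u where "u = (\<lambda>i. if i \<in> \<Phi> then t i / s else 0)"
    have le: "t i \<le> s" if "i \<in> \<Phi>" for i unfolding s_def by (rule member_le_sum) (use that tn Phi in auto)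
    have "u \<in> cube \<Phi>" unfolding cube_def u_def using tn le sp by auto
    moreover have "\<forall>i\<in>\<Phi>. t i = s * u i" unfolding u_def using sp by auto
    ultimately show ?thesis unfolding s_def[symmetric] by blast
  qed
qed

lemma gsum_norm: "\<forall>i\<in>\<Phi>. t i = s * u i \<Longrightarrow> gsum \<Phi> t x = s * gsum \<Phi> u x"
  unfolding gsum_def sum_distrib_left by (rule sum.cong) (auto simp: mult.assoc)

lemma sum_norm: "\<forall>i\<in>\<Phi>. t i = s * u i \<Longrightarrow> (\<Sum>i\<in>\<Phi>. t i * a i) = s * (\<Sum>i\<in>\<Phi>. u i * (a i :: real))"
  unfolding sum_distrib_left by (rule sum.cong) (auto simp: mult.assoc)

lemma cube_nonneg: "u \<in> cube \<Phi> \<Longrightarrow> i \<in> \<Phi> \<Longrightarrow> 0 \<le> u i \<and> u i \<le> 1"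
proof -
  assume "u \<in> cube \<Phi>" "i \<in> \<Phi>"
  moreover have "u i \<in> (if i \<in> \<Phi> then {0..1} else {0})" using \<open>u \<in> cube \<Phi>\<close> unfolding cube_def by blast
  ultimately show ?thesis by simp
qed

context S begin

lemma OS_map_app: "\<psi> \<in> CX \<Longrightarrow> OS_map f \<nu> \<psi> = \<nu> (\<lambda>x. \<psi> (f x))"
  by (simp add: OS_map_def o_def)

lemma comp_CX: "\<psi> \<in> CX \<Longrightarrow> (\<lambda>x. \<psi> (f x)) \<in> CX"
  using CX_comp[OF _ contf] by (simp add: o_def)

lemma OS_map_OSX: assumes nu: "\<nu> \<in> OSX" shows "OS_map f \<nu> \<in> OSX"
proof -
  let ?\<mu> = "OS_map f \<nu>"
  have top: "?\<mu> \<in> topspace VX"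
  proof -
    have "\<nu> (\<lambda>x. \<psi> (f x)) \<in> {Inf (range \<psi>)..Sup (range \<psi>)}" if psi: "\<psi> \<in> CX" for \<psi>
    proof -
      have c: "\<psi> \<circ> f \<in> CX" by (rule CX_comp[OF psi contf])
      have "\<nu> (\<psi> \<circ> f) \<in> {Inf (range (\<psi> \<circ> f))..Sup (range (\<psi> \<circ> f))}"
        using os_top[OF nu] c unfolding VX_def by (auto simp: PiE_iff)
      moreover have "range (\<psi> \<circ> f) = range \<psi>"
        using image_comp[of \<psi> f UNIV, symmetric] surjf by simp
      ultimately show ?thesis by (simp add: o_def)
    qed
    then show ?thesis unfolding VX_def OS_map_def by (simp add: restrict_PiE_iff o_def)
  qed
  have 1: "?\<mu> (\<lambda>_. 1) = 1" using OS_map_app[of "\<lambda>_. 1"] os_norm[OF nu] by simp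
  have 2: "\<forall>\<phi>\<in>CX. \<forall>c::real. ?\<mu> (\<lambda>x. \<phi> x + c) = ?\<mu> \<phi> + c"
  proof (intro ballI allI)
    fix \<phi> :: "'b \<Rightarrow> real" and c :: real assume p: "\<phi> \<in> CX"
    show "?\<mu> (\<lambda>x. \<phi> x + c) = ?\<mu> \<phi> + c"
      using OS_map_app[OF CX_addc[OF p, of c]] OS_map_app[OF p] os_addc[OF nu comp_CX[OF p]] by simp
  qed
  have 3: "\<forall>\<phi>\<in>CX. \<forall>\<psi>\<in>CX. (\<forall>x. \<phi> x \<le> \<psi> x) \<longrightarrow> ?\<mu> \<phi> \<le> ?\<mu> \<psi>"
  proof (intro ballI impI)
    fix \<phi> \<psi> :: "'b \<Rightarrow> real" assume p: "\<phi> \<in> CX" "\<psi> \<in> CX" and le: "\<forall>x. \<phi> x \<le> \<psi> x"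
    have "\<nu> (\<lambda>x. \<phi> (f x)) \<le> \<nu> (\<lambda>x. \<psi> (f x))" using le by (intro os_mono[OF nu] comp_CX p) auto
    then show "?\<mu> \<phi> \<le> ?\<mu> \<psi>" using OS_map_app[OF p(1)] OS_map_app[OF p(2)] by simp
  qed
  have 4: "\<forall>\<phi>\<in>CX. \<forall>t::real. t \<ge> 0 \<longrightarrow> ?\<mu> (\<lambda>x. t * \<phi> x) = t * ?\<mu> \<phi>"
  proof (intro ballI allI impI)
    fix \<phi> :: "'b \<Rightarrow> real" and t :: real assume p: "\<phi> \<in> CX" and t: "t \<ge> 0"
    show "?\<mu> (\<lambda>x. t * \<phi> x) = t * ?\<mu> \<phi>"
      using OS_map_app[OF CX_cmult[OF p, of t]] OS_map_app[OF p] os_hom[OF nu comp_CX[OF p] t] by simp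
  qed
  have 5: "\<forall>\<phi>\<in>CX. \<forall>\<psi>\<in>CX. ?\<mu> (\<lambda>x. \<phi> x + \<psi> x) \<le> ?\<mu> \<phi> + ?\<mu> \<psi>"
  proof (intro ballI)
    fix \<phi> \<psi> :: "'b \<Rightarrow> real" assume p: "\<phi> \<in> CX" "\<psi> \<in> CX"
    show "?\<mu> (\<lambda>x. \<phi> x + \<psi> x) \<le> ?\<mu> \<phi> + ?\<mu> \<psi>"
      using OS_map_app[OF CX_add[OF p]] OS_map_app[OF p(1)] OS_map_app[OF p(2)]
        os_sub[OF nu comp_CX[OF p(1)] comp_CX[OF p(2)]] by simp
  qed
  show ?thesis unfolding OSX_def using top 1 2 3 4 5 by blast
qed

lemma derive_C1:
  assumes nu: "\<nu> \<in> OSX" and Phi: "finite \<Phi>" and PhiC: "\<Phi> \<subseteq> CX" and lam: "l \<in> OSX"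
    and hA: "\<And>k. k \<in> Kset \<Phi> \<Longrightarrow> l (\<lambda>y. - M (\<lambda>x. - gsum \<Phi> (snd (snd k)) x) y)
                 < OS_map f \<nu> (\<lambda>y. - M (\<lambda>x. - gsum \<Phi> (snd (snd k)) x) y) + \<eta>"
    and t: "t \<in> Tset \<Phi>"
  shows "l (\<lambda>y. - M (\<lambda>x. - gsum \<Phi> t x) y) \<le> (\<Sum>i\<in>\<Phi>. t i * (\<nu> i + \<eta>))"
proof -
  define s where "s = (\<Sum>i\<in>\<Phi>. t i)"
  have s0: "s \<ge> 0" unfolding s_def using t unfolding Tset_def by (simp add: sum_nonneg)
  obtain u where u: "u \<in> cube \<Phi>" "\<forall>i\<in>\<Phi>. t i = s * u i" using normalize[OF Phi t] unfolding s_def by blast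
  have gC: "gsum \<Phi> v \<in> CX" for v using Phi PhiC by (rule gsum_CX)
  define h where "h = (\<lambda>y. - M (\<lambda>x. - gsum \<Phi> u x) y)"
  have hC: "h \<in> CX" unfolding h_def by (intro CX_minus M_cont gC)
  have e1: "(\<lambda>y. - M (\<lambda>x. - gsum \<Phi> t x) y) = (\<lambda>y. s * h y)"
  proof
    fix y
    have "(\<lambda>x. - gsum \<Phi> t x) = (\<lambda>x. s * (- gsum \<Phi> u x))" using gsum_norm[OF u(2)] by simp
    then have "M (\<lambda>x. - gsum \<Phi> t x) y = s * M (\<lambda>x. - gsum \<Phi> u x) y"
      using M_hom[OF CX_minus[OF gC] s0] by simp
    then show "- M (\<lambda>x. - gsum \<Phi> t x) y = s * h y" unfolding h_def by simp
  qed
  have k: "(0, 0, u) \<in> Kset \<Phi>" unfolding Kset_def using u(1) by simp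
  have lh: "l h < OS_map f \<nu> h + \<eta>" using hA[OF k] unfolding h_def by simp
  have "OS_map f \<nu> h = \<nu> (\<lambda>x. h (f x))" by (rule OS_map_app[OF hC])
  also have "\<dots> \<le> \<nu> (gsum \<Phi> u)"
  proof (rule os_mono[OF nu comp_CX[OF hC] gC])
    fix x show "h (f x) \<le> gsum \<Phi> u x" unfolding h_def using M_ge[OF CX_minus[OF gC], of u x] by simp
  qed
  also have "\<dots> \<le> (\<Sum>i\<in>\<Phi>. u i * \<nu> i)"
  proof -
    have "gsum \<Phi> u = (\<lambda>x. \<Sum>i\<in>\<Phi>. u i * (\<lambda>i. i) i x)" by (simp add: gsum_def[abs_def])
    moreover have "\<nu> (\<lambda>x. \<Sum>i\<in>\<Phi>. u i * (\<lambda>i. i) i x) \<le> (\<Sum>i\<in>\<Phi>. u i * \<nu> ((\<lambda>i. i) i))"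
      by (rule os_sum[OF nu Phi]) (use PhiC cube_nonneg[OF u(1)] in auto)
    ultimately show ?thesis by simp
  qed
  finally have mh: "OS_map f \<nu> h \<le> (\<Sum>i\<in>\<Phi>. u i * \<nu> i)" .
  have "l (\<lambda>y. - M (\<lambda>x. - gsum \<Phi> t x) y) = s * l h" unfolding e1 by (rule os_hom[OF lam hC s0])
  also have "\<dots> \<le> s * ((\<Sum>i\<in>\<Phi>. u i * \<nu> i) + \<eta>)" using lh mh s0 by (intro mult_left_mono) auto
  also have "\<dots> = (\<Sum>i\<in>\<Phi>. t i * \<nu> i) + s * \<eta>" using sum_norm[OF u(2), of \<nu>] by (simp add: distrib_left)
  also have "\<dots> = (\<Sum>i\<in>\<Phi>. t i * (\<nu> i + \<eta>))" unfolding s_def by (simp add: distrib_left sum.distrib sum_distrib_right)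
  finally show ?thesis .
qed

lemma derive_C2:
  assumes nu: "\<nu> \<in> OSX" and Phi: "finite \<Phi>" and PhiC: "\<Phi> \<subseteq> CX" and lam: "l \<in> OSX"
    and j: "j \<in> \<Phi>" and eta: "\<eta> > 0"
    and hB: "\<And>k. k \<in> Kset \<Phi> \<Longrightarrow> OS_map f \<nu> (M (G j \<Phi> k)) - \<eta> < l (M (G j \<Phi> k))"
    and t: "t \<in> Tset \<Phi>"
  shows "\<nu> j - \<eta> \<le> trm l \<nu> \<eta> \<Phi> j t"
proof -
  define \<mu> where "\<mu> = OS_map f \<nu>"
  have mu: "\<mu> \<in> OSX" unfolding \<mu>_def by (rule OS_map_OSX[OF nu])
  define s where "s = (\<Sum>i\<in>\<Phi>. t i)"
  have s0: "s \<ge> 0" unfolding s_def using t unfolding Tset_def by (simp add: sum_nonneg)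
  obtain u where u: "u \<in> cube \<Phi>" "\<forall>i\<in>\<Phi>. t i = s * u i" using normalize[OF Phi t] unfolding s_def by blast
  have gC: "gsum \<Phi> v \<in> CX" for v using Phi PhiC by (rule gsum_CX)
  have jC: "j \<in> CX" using j PhiC by blast
  have GC: "G j \<Phi> k \<in> CX" for k unfolding G_def by (intro CX_diff CX_cmult jC gC)
  define d where "d = (\<lambda>x. j x - gsum \<Phi> t x)"
  have dC: "d \<in> CX" unfolding d_def by (intro CX_diff jC gC)
  define H where "H = M d"
  have HC: "H \<in> CX" unfolding H_def by (rule M_cont[OF dC])
  have "\<nu> d \<le> \<mu> H"
  proof -
    have "\<nu> d \<le> \<nu> (\<lambda>x. H (f x))" unfolding H_def using M_ge[OF dC] by (intro os_mono[OF nu dC comp_CX[OF M_cont[OF dC]]])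
    then show ?thesis unfolding \<mu>_def using OS_map_app[OF HC] by simp
  qed
  moreover have "\<nu> j \<le> \<nu> d + \<nu> (gsum \<Phi> t)"
  proof -
    have "(\<lambda>x. d x + gsum \<Phi> t x) = j" unfolding d_def by simp
    then show ?thesis using os_sub[OF nu dC gC[of t]] by simp
  qed
  moreover have "\<nu> (gsum \<Phi> t) \<le> (\<Sum>i\<in>\<Phi>. t i * \<nu> i)"
  proof -
    have "gsum \<Phi> t = (\<lambda>x. \<Sum>i\<in>\<Phi>. t i * (\<lambda>i. i) i x)" by (simp add: gsum_def[abs_def])
    moreover have "\<nu> (\<lambda>x. \<Sum>i\<in>\<Phi>. t i * (\<lambda>i. i) i x) \<le> (\<Sum>i\<in>\<Phi>. t i * \<nu> ((\<lambda>i. i) i))"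
      by (rule os_sum[OF nu Phi]) (use PhiC t in \<open>auto simp: Tset_def\<close>)
    ultimately show ?thesis by simp
  qed
  moreover have "(\<Sum>i\<in>\<Phi>. t i * (\<nu> i + \<eta>)) = (\<Sum>i\<in>\<Phi>. t i * \<nu> i) + s * \<eta>"
    unfolding s_def by (simp add: distrib_left sum.distrib sum_distrib_right)
  ultimately have key: "\<nu> j + s * \<eta> \<le> \<mu> H + (\<Sum>i\<in>\<Phi>. t i * (\<nu> i + \<eta>))" by linarith
  have trm_eq: "trm l \<nu> \<eta> \<Phi> j t = l H + (\<Sum>i\<in>\<Phi>. t i * (\<nu> i + \<eta>))"
    unfolding trm_def H_def d_def by simp
  show ?thesis
  proof (cases "s \<le> 1")
    case True
    have k: "(1, s, u) \<in> Kset \<Phi>" unfolding Kset_def using u(1) s0 True by simp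
    have "G j \<Phi> (1, s, u) = d" unfolding G_def d_def using gsum_norm[OF u(2)] by simp
    then have "\<mu> H - \<eta> < l H" using hB[OF k] unfolding \<mu>_def H_def by simp
    then show ?thesis using key trm_eq s0 eta by (smt (verit) mult_nonneg_nonneg)
  next
    case False
    then have sp: "s > 0" "s > 1" by auto
    have k: "(1/s, 1, u) \<in> Kset \<Phi>" unfolding Kset_def using u(1) sp by simp
    define Q where "Q = M (G j \<Phi> (1/s, 1, u))"
    have QC: "Q \<in> CX" unfolding Q_def by (rule M_cont[OF GC])
    have "(\<lambda>x. s * G j \<Phi> (1/s, 1, u) x) = d"
      unfolding G_def d_def using gsum_norm[OF u(2)] sp by (simp add: algebra_simps)
    then have HQ: "H = (\<lambda>y. s * Q y)" unfolding H_def Q_def using M_hom[OF GC s0] by (metis ext)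
    have lH: "l H = s * l Q" unfolding HQ by (rule os_hom[OF lam QC s0])
    have mH: "\<mu> H = s * \<mu> Q" unfolding HQ by (rule os_hom[OF mu QC s0])
    have "\<mu> Q - \<eta> < l Q" using hB[OF k] unfolding \<mu>_def Q_def by simp
    then have "s * (\<mu> Q - \<eta>) \<le> s * l Q" using s0 by (intro mult_left_mono) auto
    then have "\<mu> H - s * \<eta> \<le> l H" using lH mH by (simp add: right_diff_distrib)
    then show ?thesis using key trm_eq eta by linarith
  qed
qed

end

context S begin

lemma conditions:
  assumes nu: "\<nu> \<in> OSX" and Phi: "finite \<Phi>" and PhiC: "\<Phi> \<subseteq> CX" and eta: "\<eta> > 0"
  shows "\<exists>V. openin OS_top V \<and> OS_map f \<nu> \<in> V \<and> (\<forall>l\<in>V. l \<in> OSX \<and>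
      (\<forall>t\<in>Tset \<Phi>. l (\<lambda>y. - M (\<lambda>x. - gsum \<Phi> t x) y) \<le> (\<Sum>i\<in>\<Phi>. t i * (\<nu> i + \<eta>))) \<and>
      (\<forall>j\<in>\<Phi>. \<forall>t\<in>Tset \<Phi>. \<nu> j - \<eta> \<le> trm l \<nu> \<eta> \<Phi> j t))"
proof -
  define \<mu> where "\<mu> = OS_map f \<nu>"
  have mu: "\<mu> \<in> OSX" unfolding \<mu>_def by (rule OS_map_OSX[OF nu])
  obtain B where B: "B > 0" "\<forall>i\<in>\<Phi>. \<forall>x. \<bar>i x\<bar> \<le> B" using bound_finite[OF cX Phi PhiC] by blast
  have B2: "\<And>i x. i \<in> \<Phi> \<Longrightarrow> \<bar>i x\<bar> \<le> B" using B(2) by blast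
  have gC: "gsum \<Phi> v \<in> CX" for v using Phi PhiC by (rule gsum_CX)
  define FA :: "real \<times> real \<times> (('a \<Rightarrow> real) \<Rightarrow> real) \<Rightarrow> 'b \<Rightarrow> real" where "FA = (\<lambda>k. (\<lambda>y. - M (\<lambda>x. - gsum \<Phi> (snd (snd k)) x) y))"
  define FB :: "('a \<Rightarrow> real) \<Rightarrow> real \<times> real \<times> (('a \<Rightarrow> real) \<Rightarrow> real) \<Rightarrow> 'b \<Rightarrow> real" where "FB = (\<lambda>j k. M (G j \<Phi> k))"
  have FAC: "FA k \<in> CX" for k unfolding FA_def by (intro CX_minus M_cont gC)
  have FBC: "FB j k \<in> CX" if "j \<in> \<Phi>" for j k
    unfolding FB_def G_def using that PhiC by (intro M_cont CX_diff CX_cmult gC) auto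
  have FAc: "\<exists>W. open W \<and> k \<in> W \<and> (\<forall>k'\<in>W\<inter>Kset \<Phi>. \<forall>y. \<bar>FA k y - FA k' y\<bar> \<le> e)"
    if k: "k \<in> Kset \<Phi>" and e: "e > 0" for k e
  proof -
    obtain W where W: "open W" "k \<in> W" "\<forall>p'\<in>W \<inter> Kset \<Phi>. \<forall>x. \<bar>G (\<lambda>_. 0) \<Phi> k x - G (\<lambda>_. 0) \<Phi> p' x\<bar> \<le> e
            \<and> \<bar>gsum \<Phi> (snd (snd k)) x - gsum \<Phi> (snd (snd p')) x\<bar> \<le> e"
      by (rule G_nbhd[where \<Phi>=\<Phi> and B=B and j="\<lambda>_. 0" and p=k and e=e, THEN exE]) (use Phi B(1) B2 k e in auto)
    have "\<bar>FA k y - FA k' y\<bar> \<le> e" if k': "k' \<in> W \<inter> Kset \<Phi>" for k' y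
    proof -
      have "\<bar>M (\<lambda>x. - gsum \<Phi> (snd (snd k)) x) y - M (\<lambda>x. - gsum \<Phi> (snd (snd k')) x) y\<bar> \<le> e"
      proof (rule M_lip[OF CX_minus[OF gC] CX_minus[OF gC]])
        fix x
        have "\<bar>gsum \<Phi> (snd (snd k)) x - gsum \<Phi> (snd (snd k')) x\<bar> \<le> e" using W(3) k' by blast
        then show "\<bar>- gsum \<Phi> (snd (snd k)) x - - gsum \<Phi> (snd (snd k')) x\<bar> \<le> e"
          unfolding abs_le_iff by linarith
      qed
      then show ?thesis unfolding FA_def by simp
    qed
    then show ?thesis using W by blast
  qed
  have FBc: "\<exists>W. open W \<and> k \<in> W \<and> (\<forall>k'\<in>W\<inter>Kset \<Phi>. \<forall>y. \<bar>FB j k y - FB j k' y\<bar> \<le> e)"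
    if j: "j \<in> \<Phi>" and k: "k \<in> Kset \<Phi>" and e: "e > 0" for j k e
  proof -
    have jC: "j \<in> CX" using j PhiC by blast
    have GC: "G j \<Phi> p \<in> CX" for p unfolding G_def by (intro CX_diff CX_cmult jC gC)
    obtain W where W: "open W" "k \<in> W" "\<forall>p'\<in>W \<inter> Kset \<Phi>. \<forall>x. \<bar>G j \<Phi> k x - G j \<Phi> p' x\<bar> \<le> e
            \<and> \<bar>gsum \<Phi> (snd (snd k)) x - gsum \<Phi> (snd (snd p')) x\<bar> \<le> e"
      by (rule G_nbhd[where \<Phi>=\<Phi> and B=B and j=j and p=k and e=e, THEN exE]) (use Phi B(1) B2 k e j in auto)
    have "\<bar>FB j k y - FB j k' y\<bar> \<le> e" if k': "k' \<in> W \<inter> Kset \<Phi>" for k' y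
      unfolding FB_def by (rule M_lip[OF GC GC]) (use W(3) k' in auto)
    then show ?thesis using W by blast
  qed
  obtain VA where VA: "openin OS_top VA" "\<mu> \<in> VA" "\<forall>l\<in>VA. \<forall>k\<in>Kset \<Phi>. \<bar>l (FA k) - \<mu> (FA k)\<bar> < \<eta>"
    using family[OF compact_Kset FAC FAc mu eta] by blast
  have "\<forall>j\<in>\<Phi>. \<exists>V. openin OS_top V \<and> \<mu> \<in> V \<and> (\<forall>l\<in>V. \<forall>k\<in>Kset \<Phi>. \<bar>l (FB j k) - \<mu> (FB j k)\<bar> < \<eta>)"
  proof
    fix j assume j: "j \<in> \<Phi>"
    show "\<exists>V. openin OS_top V \<and> \<mu> \<in> V \<and> (\<forall>l\<in>V. \<forall>k\<in>Kset \<Phi>. \<bar>l (FB j k) - \<mu> (FB j k)\<bar> < \<eta>)"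
      by (rule family[OF compact_Kset FBC[OF j] FBc[OF j] mu eta])
  qed
  then obtain VB where VB: "\<And>j. j \<in> \<Phi> \<Longrightarrow> openin OS_top (VB j) \<and> \<mu> \<in> VB j \<and>
      (\<forall>l\<in>VB j. \<forall>k\<in>Kset \<Phi>. \<bar>l (FB j k) - \<mu> (FB j k)\<bar> < \<eta>)" by metis
  define V where "V = \<Inter>(insert VA (VB ` \<Phi>))"
  have oV: "openin OS_top V" unfolding V_def using Phi VA(1) VB by (intro openin_Inter) auto
  have mV: "\<mu> \<in> V" unfolding V_def using VA(2) VB by auto
  have "l \<in> OSX \<and>
      (\<forall>t\<in>Tset \<Phi>. l (\<lambda>y. - M (\<lambda>x. - gsum \<Phi> t x) y) \<le> (\<Sum>i\<in>\<Phi>. t i * (\<nu> i + \<eta>))) \<and>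
      (\<forall>j\<in>\<Phi>. \<forall>t\<in>Tset \<Phi>. \<nu> j - \<eta> \<le> trm l \<nu> \<eta> \<Phi> j t)" if l: "l \<in> V" for l
  proof -
    have "l \<in> VA" using l unfolding V_def by blast
    then have lO: "l \<in> OSX" using openin_subset[OF VA(1)] unfolding OS_top_def by auto
    have hA: "\<And>k. k \<in> Kset \<Phi> \<Longrightarrow> l (FA k) < \<mu> (FA k) + \<eta>" using VA(3) \<open>l \<in> VA\<close> by fastforce
    have hB: "\<And>j k. j \<in> \<Phi> \<Longrightarrow> k \<in> Kset \<Phi> \<Longrightarrow> \<mu> (FB j k) - \<eta> < l (FB j k)"
    proof -
      fix j k assume j: "j \<in> \<Phi>" and k: "k \<in> Kset \<Phi>"
      have "l \<in> VB j" using l j unfolding V_def by blast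
      then have "\<bar>l (FB j k) - \<mu> (FB j k)\<bar> < \<eta>" using VB[OF j] k by blast
      then show "\<mu> (FB j k) - \<eta> < l (FB j k)" by linarith
    qed
    have c1: "\<forall>t\<in>Tset \<Phi>. l (\<lambda>y. - M (\<lambda>x. - gsum \<Phi> t x) y) \<le> (\<Sum>i\<in>\<Phi>. t i * (\<nu> i + \<eta>))"
    proof
      fix t assume t: "t \<in> Tset \<Phi>"
      show "l (\<lambda>y. - M (\<lambda>x. - gsum \<Phi> t x) y) \<le> (\<Sum>i\<in>\<Phi>. t i * (\<nu> i + \<eta>))"
        by (rule derive_C1[OF nu Phi PhiC lO _ t]) (use hA in \<open>simp add: FA_def \<mu>_def\<close>)
    qed
    have c2: "\<forall>j\<in>\<Phi>. \<forall>t\<in>Tset \<Phi>. \<nu> j - \<eta> \<le> trm l \<nu> \<eta> \<Phi> j t"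
    proof (intro ballI)
      fix j t assume j: "j \<in> \<Phi>" and t: "t \<in> Tset \<Phi>"
      show "\<nu> j - \<eta> \<le> trm l \<nu> \<eta> \<Phi> j t"
        by (rule derive_C2[OF nu Phi PhiC lO j eta _ t]) (use hB[OF j] in \<open>simp add: FB_def \<mu>_def\<close>)
    qed
    show ?thesis using lO c1 c2 by blast
  qed
  then show ?thesis using oV mV unfolding \<mu>_def by blast
qed

theorem OS_open: "open_map (OS_top :: (('a \<Rightarrow> real) \<Rightarrow> real) topology)
                  (OS_top :: (('b \<Rightarrow> real) \<Rightarrow> real) topology) (OS_map f)"
  unfolding open_map_def
proof (intro allI impI)
  fix U :: "(('a \<Rightarrow> real) \<Rightarrow> real) set"
  assume U: "openin OS_top U"
  show "openin OS_top (OS_map f ` U)"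
    unfolding openin_subopen[of OS_top "OS_map f ` U"]
  proof
    fix z assume "z \<in> OS_map f ` U"
    then obtain \<nu> where nuU: "\<nu> \<in> U" and z: "z = OS_map f \<nu>" by blast
    obtain Oo where O: "openin VX Oo" "U = Oo \<inter> OSX" using U unfolding OS_top_def openin_subtopology by blast
    have nu: "\<nu> \<in> OSX" "\<nu> \<in> Oo" using nuU O(2) by auto
    define I where "I = (\<lambda>\<phi> :: 'a \<Rightarrow> real. {Inf (range \<phi>)..Sup (range \<phi>)})"
    have VXe: "VX = product_topology (\<lambda>\<phi>. top_of_set (I \<phi>)) CX" unfolding VX_def I_def by simp
    obtain W where W: "finite {i \<in> CX. W i \<noteq> topspace (top_of_set (I i))}"
        "\<forall>i\<in>CX. openin (top_of_set (I i)) (W i)" "\<nu> \<in> PiE CX W" "PiE CX W \<subseteq> Oo"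
      using O(1) nu(2) unfolding VXe openin_product_topology_alt by blast
    define \<Phi> where "\<Phi> = {i \<in> CX. W i \<noteq> I i}"
    have Phi: "finite \<Phi>" using W(1) unfolding \<Phi>_def by simp
    have PhiC: "\<Phi> \<subseteq> CX" unfolding \<Phi>_def by blast
    have "\<forall>i\<in>\<Phi>. \<exists>e>0. \<forall>y\<in>I i. dist y (\<nu> i) < e \<longrightarrow> y \<in> W i"
    proof
      fix i assume i: "i \<in> \<Phi>"
      then have "openin (top_of_set (I i)) (W i)" "\<nu> i \<in> W i" using W(2,3) PhiC by (auto simp: PiE_iff)
      then show "\<exists>e>0. \<forall>y\<in>I i. dist y (\<nu> i) < e \<longrightarrow> y \<in> W i"
        unfolding openin_euclidean_subtopology_iff by blast
    qed
    then obtain ee where ee: "\<And>i. i \<in> \<Phi> \<Longrightarrow> ee i > 0 \<and> (\<forall>y\<in>I i. dist y (\<nu> i) < ee i \<longrightarrow> y \<in> W i)"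
      by metis
    define \<epsilon> where "\<epsilon> = Min (insert 1 (ee ` \<Phi>))"
    have eps: "\<epsilon> > 0" unfolding \<epsilon>_def using Phi ee by (subst Min_gr_iff) auto
    have epsle: "\<epsilon> \<le> ee i" if "i \<in> \<Phi>" for i unfolding \<epsilon>_def using Phi that by (intro Min_le) auto
    define \<eta> where "\<eta> = \<epsilon> / 2"
    have eta: "\<eta> > 0" "\<eta> < \<epsilon>" unfolding \<eta>_def using eps by auto
    obtain V where V: "openin OS_top V" "OS_map f \<nu> \<in> V" and
      VC: "\<And>l. l \<in> V \<Longrightarrow> l \<in> OSX \<and>
      (\<forall>t\<in>Tset \<Phi>. l (\<lambda>y. - M (\<lambda>x. - gsum \<Phi> t x) y) \<le> (\<Sum>i\<in>\<Phi>. t i * (\<nu> i + \<eta>))) \<and>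
      (\<forall>j\<in>\<Phi>. \<forall>t\<in>Tset \<Phi>. \<nu> j - \<eta> \<le> trm l \<nu> \<eta> \<Phi> j t)"
      using conditions[OF nu(1) Phi PhiC eta(1)] by blast
    have "V \<subseteq> OS_map f ` U"
    proof
      fix l assume l: "l \<in> V"
      define \<nu>' where "\<nu>' = restrict (Nf l \<nu> \<eta> \<Phi>) CX"
      have cons: "\<nu>' \<in> OSX \<and> OS_map f \<nu>' = l \<and> (\<forall>j\<in>\<Phi>. \<bar>\<nu>' j - \<nu> j\<bar> \<le> \<eta>)"
        unfolding \<nu>'_def using VC[OF l] by (intro construct[OF nu(1) Phi PhiC]) auto
      have "\<nu>' \<in> PiE CX W"
      proof -
        have top: "\<nu>' \<in> PiE CX I" using cons os_top[of \<nu>'] unfolding VX_def I_def by simp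
        have "\<nu>' i \<in> W i" if i: "i \<in> CX" for i
        proof (cases "i \<in> \<Phi>")
          case True
          have "\<nu>' i \<in> I i" using top i by (auto simp: PiE_iff)
          moreover have "dist (\<nu>' i) (\<nu> i) < ee i" using cons True epsle[OF True] eta
            by (simp add: dist_real_def) (smt (verit))
          ultimately show ?thesis using ee[OF True] by blast
        next
          case False
          then have "W i = I i" using i unfolding \<Phi>_def by blast
          then show ?thesis using top i by (auto simp: PiE_iff)
        qed
        then show ?thesis using top by (auto simp: PiE_iff)
      qed
      then have "\<nu>' \<in> U" using W(4) O(2) cons by blast
      then show "l \<in> OS_map f ` U" using cons by force
    qed
    then show "\<exists>T. openin OS_top T \<and> z \<in> T \<and> T \<subseteq> OS_map f ` U" using V z by blast
  qed
qed

end

theorem proposition2: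
  fixes f :: "'a::t2_space \<Rightarrow> 'b::t2_space"
  assumes "compact (UNIV :: 'a set)" and "compact (UNIV :: 'b set)"
    and "continuous_on UNIV f"
    and "\<And>U. open U \<Longrightarrow> open (f ` U)"
    and "surj f"
  shows "open_map (OS_top :: (('a \<Rightarrow> real) \<Rightarrow> real) topology)
                  (OS_top :: (('b \<Rightarrow> real) \<Rightarrow> real) topology) (OS_map f)"
proof -
  interpret S f using assms by unfold_locales
  show ?thesis by (rule OS_open)
qed

end
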